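(* Let $H$ be a monoid in $\mathcal{C}_d$ with $d \ge 3$. If the convex cone generated by $H$ in the $\mathbb{Q}$-vector space $\mathbb{Q}\otimes_{\mathbb{Z}}\mathrm{gp}(H)$ is polyhedral, then the elasticity $\rho(H)$ is either a rational number or $\infty$.
   Context: Monoids are commutative, cancellative, reduced. $\mathrm{gp}(H)$ is the Grothendieck group of $H$; $\mathcal{C}_d$ is the collection of all rank-$d$ submonoids of free commutative monoids of finite rank (rank = rank of $\mathrm{gp}(H)$); such monoids are atomic. The cone generated by $H$ is the set of all finite nonnegative rational linear combinations of elements of $H$; a convex cone is polyhedral if it has only finitely many faces (equivalently, is finitely generated as a cone). For nonzero $x\in H$, $\mathsf{L}(x)$ is the set of all $n$ such that $x$ is a sum of $n$ atoms, $\rho(x)=\sup\mathsf{L}(x)/\inf\mathsf{L}(x)$, and $\rho(H)=\sup\{\rho(x)\mid x\in H\setminus\{0\}\}$. *)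

theory Defs
  imports Main "HOL-Library.Extended_Real"
begin

text \<open>The free commutative monoid of finite rank is modelled as the functions
  'n \<Rightarrow> nat for a finite index type 'n (i.e. N^n with n = CARD('n)).
  Monoids in C_d are (up to isomorphism) submonoids H of such a monoid whose
  Grothendieck group has rank d.\<close>

definition vzero :: "'n \<Rightarrow> nat" where
  "vzero = (\<lambda>i. 0)"

definition vadd :: "('n \<Rightarrow> nat) \<Rightarrow> ('n \<Rightarrow> nat) \<Rightarrow> ('n \<Rightarrow> nat)" where
  "vadd x y = (\<lambda>i. x i + y i)"

definition is_submonoid :: "('n::finite \<Rightarrow> nat) set \<Rightarrow> bool" where
  "is_submonoid H \<longleftrightarrow> vzero \<in> H \<and> (\<forall>x\<in>H. \<forall>y\<in>H. vadd x y \<in> H)"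

text \<open>Embedding into the rational vector space Q^n (which contains Q \<otimes> gp(H)).\<close>
definition to_rat :: "('n \<Rightarrow> nat) \<Rightarrow> ('n \<Rightarrow> rat)" where
  "to_rat x = (\<lambda>i. of_nat (x i))"

definition rat_lin_indep :: "('n \<Rightarrow> rat) set \<Rightarrow> bool" where
  "rat_lin_indep S \<longleftrightarrow> finite S \<and>
     (\<forall>c :: ('n \<Rightarrow> rat) \<Rightarrow> rat. (\<forall>i. (\<Sum>v\<in>S. c v * v i) = 0) \<longrightarrow> (\<forall>v\<in>S. c v = 0))"

text \<open>rank of gp(H) = dim_Q (Q \<otimes> gp(H)) = maximal number of Q-linearly independent
  elements of H.\<close>
definition gp_rank :: "('n \<Rightarrow> nat) set \<Rightarrow> nat \<Rightarrow> bool" where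
  "gp_rank H d \<longleftrightarrow>
     (\<exists>S. S \<subseteq> to_rat ` H \<and> rat_lin_indep S \<and> card S = d) \<and>
     (\<forall>S. S \<subseteq> to_rat ` H \<and> rat_lin_indep S \<longrightarrow> card S \<le> d)"

definition rat_cone :: "('n \<Rightarrow> rat) set \<Rightarrow> ('n \<Rightarrow> rat) set" where
  "rat_cone A = {v. \<exists>S c. finite S \<and> S \<subseteq> A \<and> (\<forall>a\<in>S. (c a :: rat) \<ge> 0) \<and>
                          v = (\<lambda>i. \<Sum>a\<in>S. c a * a i)}"

definition polyhedral_cone :: "('n \<Rightarrow> rat) set \<Rightarrow> bool" where
  "polyhedral_cone C \<longleftrightarrow> (\<exists>F. finite F \<and> rat_cone F = C)"

definition atoms :: "('n \<Rightarrow> nat) set \<Rightarrow> ('n \<Rightarrow> nat) set" where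
  "atoms H = {u \<in> H. u \<noteq> vzero \<and>
                 (\<forall>a\<in>H. \<forall>b\<in>H. u = vadd a b \<longrightarrow> a = vzero \<or> b = vzero)}"

definition lsum :: "('n \<Rightarrow> nat) list \<Rightarrow> ('n \<Rightarrow> nat)" where
  "lsum as = (\<lambda>i. sum_list (map (\<lambda>a. a i) as))"

definition lengths :: "('n \<Rightarrow> nat) set \<Rightarrow> ('n \<Rightarrow> nat) \<Rightarrow> nat set" where
  "lengths H x = {k. \<exists>as. length as = k \<and> set as \<subseteq> atoms H \<and> lsum as = x}"

text \<open>rho(x) = sup L(x) / inf L(x) (the set of lengths is nonempty and consists of
  positive integers for nonzero x in an atomic monoid; sup L(x) = \<infinity> when L(x)
  is infinite).\<close>
definition elast_elem :: "('n \<Rightarrow> nat) set \<Rightarrow> ('n \<Rightarrow> nat) \<Rightarrow> ereal" where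
  "elast_elem H x =
     (if finite (lengths H x)
      then ereal (real (Max (lengths H x)) / real (Min (lengths H x)))
      else \<infinity>)"

definition elasticity :: "('n \<Rightarrow> nat) set \<Rightarrow> ereal" where
  "elasticity H = (SUP x \<in> H - {vzero}. elast_elem H x)"

end

theory Submission
  imports Defs "HOL-Library.FuncSet"
begin


definition nrm :: "('n::finite \<Rightarrow> nat) \<Rightarrow> nat" where
  "nrm x = (\<Sum>i\<in>UNIV. x i)"

lemma nrm_add: "nrm (\<lambda>i. x i + y i) = nrm x + nrm y"
  by (simp add: nrm_def sum.distrib)

lemma nrm_pos: "x \<noteq> vzero \<Longrightarrow> nrm x \<ge> 1"
proof -
  assume "x \<noteq> vzero"
  then obtain i where "x i > 0" by (auto simp: vzero_def)
  moreover have "x i \<le> nrm x" unfolding nrm_def by (rule member_le_sum) auto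
  ultimately show ?thesis by simp
qed

lemma lsum_Nil: "lsum [] = vzero" by (simp add: lsum_def vzero_def)
lemma lsum_Cons: "lsum (a # as) = (\<lambda>i. a i + lsum as i)" by (simp add: lsum_def)
lemma lsum_append: "lsum (as @ bs) = (\<lambda>i. lsum as i + lsum bs i)" by (simp add: lsum_def)

lemma atoms_sub: "atoms H \<subseteq> H" by (auto simp: atoms_def)
lemma atoms_nz: "a \<in> atoms H \<Longrightarrow> a \<noteq> vzero" by (auto simp: atoms_def)

lemma lsum_in_H: "is_submonoid H \<Longrightarrow> set as \<subseteq> H \<Longrightarrow> lsum as \<in> H"
  by (induction as) (auto simp: lsum_Nil lsum_Cons is_submonoid_def vadd_def)

lemma lengths_in_H: "is_submonoid H \<Longrightarrow> k \<in> lengths H x \<Longrightarrow> x \<in> H"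
  using lsum_in_H atoms_sub unfolding lengths_def by blast

lemma nrm_lsum: "nrm (lsum (as::('n::finite\<Rightarrow>nat) list)) = sum_list (map nrm as)"
  by (induction as) (auto simp: lsum_Nil lsum_Cons nrm_add, simp add: nrm_def vzero_def)

lemma len_le_nrm: fixes H :: "('n::finite \<Rightarrow> nat) set" shows "set as \<subseteq> atoms H \<Longrightarrow> length as \<le> nrm (lsum as)"
proof (induction as)
  case Nil then show ?case by simp
next
  case (Cons a as)
  then have "nrm a \<ge> 1" using nrm_pos atoms_nz by auto
  then show ?case using Cons by (simp add: lsum_Cons nrm_add)
qed

lemma lengths_le: fixes H :: "('n::finite \<Rightarrow> nat) set" shows "k \<in> lengths H x \<Longrightarrow> k \<le> nrm x"
  unfolding lengths_def using len_le_nrm by blast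

lemma lengths_finite: fixes H :: "('n::finite \<Rightarrow> nat) set" shows "finite (lengths H x)"
  by (rule finite_subset[of _ "{..nrm x}"]) (auto dest: lengths_le)

lemma zero_lengths: "0 \<in> lengths H x \<Longrightarrow> x = vzero"
  by (auto simp: lengths_def lsum_Nil)

lemma lengths_add: "k1 \<in> lengths H x \<Longrightarrow> k2 \<in> lengths H y \<Longrightarrow> k1 + k2 \<in> lengths H (\<lambda>i. x i + y i)"
proof -
  assume "k1 \<in> lengths H x" "k2 \<in> lengths H y"
  then obtain as bs where "length as = k1" "set as \<subseteq> atoms H" "lsum as = x"
     "length bs = k2" "set bs \<subseteq> atoms H" "lsum bs = y" by (auto simp: lengths_def)
  then show ?thesis unfolding lengths_def
    by (intro CollectI exI[of _ "as @ bs"]) (auto simp: lsum_append)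
qed

lemma lengths_zero: "0 \<in> lengths H (\<lambda>i. 0)"
  unfolding lengths_def by (intro CollectI exI[of _ "[]"]) (auto simp: lsum_def)

lemma lengths_mult: "k \<in> lengths H x \<Longrightarrow> m * k \<in> lengths H (\<lambda>i. m * x i)"
proof (induction m)
  case 0 then show ?case using lengths_zero by simp
next
  case (Suc m)
  from lengths_add[OF Suc.prems Suc.IH[OF Suc.prems]] show ?case by simp
qed

lemma lengths_sum:
  assumes "finite S" "\<And>h. h \<in> S \<Longrightarrow> k h \<in> lengths H (f h)"
  shows "(\<Sum>h\<in>S. m h * k h) \<in> lengths H (\<lambda>i. \<Sum>h\<in>S. m h * f h i)"
  using assms
proof (induction S rule: finite_induct)
  case empty then show ?case using lengths_zero by simp
next
  case (insert h S)
  have "m h * k h + (\<Sum>h\<in>S. m h * k h) \<in> lengths H (\<lambda>i. m h * f h i + (\<Sum>h\<in>S. m h * f h i))"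
    by (rule lengths_add[OF lengths_mult]) (use insert in auto)
  then show ?case using insert by simp
qed

lemma atom_length: "a \<in> atoms H \<Longrightarrow> 1 \<in> lengths H a"
  unfolding lengths_def by (intro CollectI exI[of _ "[a]"]) (auto simp: lsum_def)

lemma factorization:
  assumes "is_submonoid H" "x \<in> H"
  shows "\<exists>as. set as \<subseteq> atoms H \<and> lsum as = x"
  using assms(2)
proof (induction "nrm x" arbitrary: x rule: less_induct)
  case less
  show ?case
  proof (cases "x = vzero")
    case True then show ?thesis by (intro exI[of _ "[]"]) (simp add: lsum_Nil)
  next
    case False
    show ?thesis
    proof (cases "x \<in> atoms H")
      case True then show ?thesis by (intro exI[of _ "[x]"]) (simp add: lsum_def)
    next
      case na: False
      then obtain a b where ab: "a \<in> H" "b \<in> H" "x = vadd a b" "a \<noteq> vzero" "b \<noteq> vzero"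
        using False less.prems unfolding atoms_def by blast
      have na: "nrm x = nrm a + nrm b" using ab(3) by (simp add: vadd_def nrm_add)
      have "nrm a < nrm x" "nrm b < nrm x" using na nrm_pos[OF ab(4)] nrm_pos[OF ab(5)] by auto
      then obtain as bs where "set as \<subseteq> atoms H" "lsum as = a" "set bs \<subseteq> atoms H" "lsum bs = b"
        using less.hyps ab by metis
      then show ?thesis using ab(3)
        by (intro exI[of _ "as @ bs"]) (auto simp: lsum_append vadd_def)
    qed
  qed
qed

lemma lengths_ne: fixes H :: "('n::finite \<Rightarrow> nat) set" shows "is_submonoid H \<Longrightarrow> x \<in> H \<Longrightarrow> lengths H x \<noteq> {}"
  using factorization unfolding lengths_def by blast

lemma elast_elem_eq:
  assumes "is_submonoid H" "x \<in> H" "x \<noteq> vzero"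
  shows "elast_elem H x = ereal (real (Max (lengths H x)) / real (Min (lengths H x)))"
    and "Max (lengths H x) \<in> lengths H x" "Min (lengths H x) \<in> lengths H x"
    and "Min (lengths H x) \<ge> 1"
proof -
  show "elast_elem H x = ereal (real (Max (lengths H x)) / real (Min (lengths H x)))"
    by (simp add: elast_elem_def lengths_finite)
  show "Max (lengths H x) \<in> lengths H x" "Min (lengths H x) \<in> lengths H x"
    using lengths_ne[OF assms(1,2)] lengths_finite[of H x] by auto
  then show "Min (lengths H x) \<ge> 1" using zero_lengths assms(3)
    by (metis less_one linorder_not_le)
qed

lemma elast_elem_ge:
  assumes "is_submonoid H" "x \<in> H" "x \<noteq> vzero" "k \<in> lengths H x" "l \<in> lengths H x"
  shows "ereal (real k / real l) \<le> elast_elem H x"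
proof -
  note e = elast_elem_eq[OF assms(1-3)]
  have "k \<le> Max (lengths H x)" "Min (lengths H x) \<le> l" using assms(4,5) lengths_finite[of H x] by auto
  then have "real k / real l \<le> real (Max (lengths H x)) / real (Min (lengths H x))"
    using e(4) by (intro frac_le) auto
  then show ?thesis using e(1) by simp
qed




definition cone_rep :: "('n \<Rightarrow> nat) set \<Rightarrow> ('n \<Rightarrow> rat) \<Rightarrow> bool" where
  "cone_rep G v \<longleftrightarrow> (\<exists>e. (\<forall>h\<in>G. 0 \<le> e h) \<and> v = (\<lambda>i. \<Sum>h\<in>G. e h * of_nat (h i)))"

lemma cone_rep_zero: "cone_rep G (\<lambda>i. 0)"
  unfolding cone_rep_def by (intro exI[of _ "\<lambda>_. 0"]) simp

lemma cone_rep_add: "cone_rep G u \<Longrightarrow> cone_rep G v \<Longrightarrow> cone_rep G (\<lambda>i. u i + v i)"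
  unfolding cone_rep_def
  by (elim exE conjE, rename_tac e1 e2, rule_tac x="\<lambda>h. e1 h + e2 h" in exI)
     (auto simp: distrib_right sum.distrib)

lemma cone_rep_scale: "cone_rep G v \<Longrightarrow> (c::rat) \<ge> 0 \<Longrightarrow> cone_rep G (\<lambda>i. c * v i)"
  unfolding cone_rep_def
  by (elim exE conjE, rename_tac e1, rule_tac x="\<lambda>h. c * e1 h" in exI)
     (auto simp: sum_distrib_left mult.assoc)

lemma cone_rep_sum:
  assumes "finite S" "\<And>s. s \<in> S \<Longrightarrow> cone_rep G (g s)" "\<And>s. s \<in> S \<Longrightarrow> (c s :: rat) \<ge> 0"
  shows "cone_rep G (\<lambda>i. \<Sum>s\<in>S. c s * g s i)"
  using assms
proof (induction S rule: finite_induct)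
  case empty then show ?case using cone_rep_zero by simp
next
  case (insert s S)
  have "cone_rep G (\<lambda>i. c s * g s i + (\<Sum>s\<in>S. c s * g s i))"
    by (rule cone_rep_add[OF cone_rep_scale]) (use insert in auto)
  then show ?case using insert by simp
qed

lemma cone_rep_rat_cone:
  assumes "\<And>x. x \<in> X \<Longrightarrow> cone_rep G x" "v \<in> rat_cone X"
  shows "cone_rep G v"
proof -
  obtain S c where "finite S" "S \<subseteq> X" "\<forall>a\<in>S. c a \<ge> 0" "v = (\<lambda>i. \<Sum>a\<in>S. c a * a i)"
    using assms(2) unfolding rat_cone_def by blast
  then show ?thesis using cone_rep_sum[of S G "\<lambda>a. a" c] assms(1) by auto
qed

lemma rat_cone_mono: "A \<subseteq> B \<Longrightarrow> rat_cone A \<subseteq> rat_cone B"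
  unfolding rat_cone_def by blast

lemma rat_cone_self: "a \<in> A \<Longrightarrow> a \<in> rat_cone A"
  unfolding rat_cone_def
  by (intro CollectI exI[of _ "{a}"] exI[of _ "\<lambda>_. 1"]) auto

lemma rat_cone_fin_sub:
  assumes "finite F" "F \<subseteq> rat_cone A"
  shows "\<exists>G. finite G \<and> G \<subseteq> A \<and> F \<subseteq> rat_cone G"
  using assms
proof (induction F rule: finite_induct)
  case empty then show ?case by auto
next
  case (insert f F)
  then obtain G where G: "finite G" "G \<subseteq> A" "F \<subseteq> rat_cone G" by auto
  obtain S c where S: "finite S" "S \<subseteq> A" "\<forall>a\<in>S. c a \<ge> 0" "f = (\<lambda>i. \<Sum>a\<in>S. c a * a i)"
    using insert.prems unfolding rat_cone_def by blast
  have "f \<in> rat_cone (G \<union> S)" unfolding rat_cone_def using S by blast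
  moreover have "F \<subseteq> rat_cone (G \<union> S)" using G rat_cone_mono[of G "G \<union> S"] by auto
  ultimately show ?case using G S by (intro exI[of _ "G \<union> S"]) auto
qed

lemma inj_to_rat: "inj to_rat"
proof (rule injI)
  fix x y :: "'a \<Rightarrow> nat"
  assume "to_rat x = to_rat y"
  then have "\<And>i. (of_nat (x i)::rat) = of_nat (y i)" unfolding to_rat_def by metis
  then show "x = y" by auto
qed

lemma cone_finite_gen:
  fixes H :: "('n::finite \<Rightarrow> nat) set"
  assumes "polyhedral_cone (rat_cone (to_rat ` H))"
  shows "\<exists>GH. finite GH \<and> GH \<subseteq> H - {vzero} \<and> (\<forall>x\<in>H. cone_rep GH (to_rat x))"
proof -
  obtain F where F: "finite F" "rat_cone F = rat_cone (to_rat ` H)"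
    using assms unfolding polyhedral_cone_def by blast
  have "F \<subseteq> rat_cone F" using rat_cone_self by (intro subsetI)
  then have "F \<subseteq> rat_cone (to_rat ` H)" by (simp only: F(2))
  then have "\<exists>G. finite G \<and> G \<subseteq> to_rat ` H \<and> F \<subseteq> rat_cone G"
    by (rule rat_cone_fin_sub[OF F(1)])
  then obtain G where G: "finite G" "G \<subseteq> to_rat ` H" "F \<subseteq> rat_cone G"
    by (elim exE conjE)
  define GH where "GH = {h\<in>H. h \<noteq> vzero \<and> to_rat h \<in> G}"
  have sub: "to_rat ` GH \<subseteq> G" unfolding GH_def by blast
  have fv: "finite (to_rat ` GH)" by (rule finite_subset[OF sub G(1)])
  have fin: "finite GH" by (rule finite_imageD[OF fv]) (meson inj_to_rat inj_on_subset subset_UNIV)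
  have cg: "cone_rep GH g" if "g \<in> G" for g
  proof -
    obtain h where h: "h \<in> H" "g = to_rat h" using G(2) \<open>g \<in> G\<close> by auto
    show ?thesis
    proof (cases "h = vzero")
      case True
      then have "g = (\<lambda>i. 0)" using h by (simp add: to_rat_def vzero_def)
      then show ?thesis using cone_rep_zero by simp
    next
      case False
      then have "h \<in> GH" using h that by (auto simp: GH_def)
      have "(\<Sum>h'\<in>GH. (if h' = h then 1 else 0) * (of_nat (h' i)::rat)) = of_nat (h i)" for i
      proof -
        have "(\<Sum>h'\<in>GH. (if h' = h then 1 else 0) * (of_nat (h' i)::rat))
            = (\<Sum>h'\<in>GH. if h' = h then of_nat (h' i) else 0)" by (rule sum.cong) auto
        also have "\<dots> = of_nat (h i)" using fin \<open>h \<in> GH\<close> by (simp add: sum.delta)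
        finally show ?thesis .
      qed
      then show ?thesis unfolding cone_rep_def
        by (intro exI[of _ "\<lambda>h'. if h' = h then 1 else 0"]) (auto simp: h to_rat_def)
    qed
  qed
  have cf: "cone_rep GH f" if "f \<in> F" for f
    using cone_rep_rat_cone[OF cg] G(3) that by blast
  have "\<forall>x\<in>H. cone_rep GH (to_rat x)"
  proof
    fix x assume "x \<in> H"
    then have "to_rat x \<in> rat_cone (to_rat ` H)" by (intro rat_cone_self imageI)
    then have "to_rat x \<in> rat_cone F" by (simp only: F(2))
    then show "cone_rep GH (to_rat x)" using cone_rep_rat_cone[OF cf] by blast
  qed
  then show ?thesis using fin by (intro exI[of _ GH]) (auto simp: GH_def)
qed

lemma clear_denoms:
  assumes "finite S" "\<And>h. h \<in> S \<Longrightarrow> (0::rat) \<le> e h"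
  shows "\<exists>N::nat. N > 0 \<and> (\<exists>m. \<forall>h\<in>S. of_nat N * e h = of_nat (m h))"
  using assms
proof (induction S rule: finite_induct)
  case empty then show ?case by (intro exI[of _ 1]) auto
next
  case (insert h S)
  then obtain N m where Nm: "N > 0" "\<forall>h\<in>S. of_nat N * e h = of_nat (m h)" by auto
  obtain a b where ab: "quotient_of (e h) = (a, b)" by (cases "quotient_of (e h)")
  have b: "b > 0" using quotient_of_denom_pos[OF ab] .
  have eh: "e h = of_int a / of_int b" using quotient_of_div[OF ab] .
  have "0 \<le> e h" using insert by auto
  then have a: "a \<ge> 0" using b eh by (simp add: zero_le_divide_iff)
  define m' where "m' = (\<lambda>h'. if h' = h then N * nat a else nat b * m h')"
  have "\<forall>h'\<in>insert h S. of_nat (N * nat b) * e h' = of_nat (m' h')"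
  proof
    fix h' assume h': "h' \<in> insert h S"
    show "of_nat (N * nat b) * e h' = of_nat (m' h')"
    proof (cases "h' = h")
      case True
      then show ?thesis using a b by (simp add: m'_def eh)
    next
      case False
      then have "h' \<in> S" using h' by auto
      then have "of_nat N * e h' = of_nat (m h')" using Nm by auto
      then show ?thesis using False by (simp add: m'_def algebra_simps)
    qed
  qed
  then show ?case using Nm b by (intro exI[of _ "N * nat b"]) auto
qed




lemma infinite_case:
  fixes H :: "('n::finite \<Rightarrow> nat) set"
  assumes sm: "is_submonoid H" and pc: "polyhedral_cone (rat_cone (to_rat ` H))"
    and unb: "\<And>B. \<exists>a\<in>atoms H. nrm a > B"
  shows "elasticity H = \<infinity>"
proof -
  have "\<exists>GH. finite GH \<and> GH \<subseteq> H - {vzero} \<and> (\<forall>x\<in>H. cone_rep GH (to_rat x))"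
    by (rule cone_finite_gen[OF pc])
  then obtain GH where GH: "finite GH" "GH \<subseteq> H - {vzero}" "\<forall>x\<in>H. cone_rep GH (to_rat x)"
    by (elim exE conjE)
  have "\<forall>h\<in>GH. \<exists>k. k \<in> lengths H h \<and> k \<ge> 1"
  proof
    fix h assume "h \<in> GH"
    then have h: "h \<in> H" "h \<noteq> vzero" using GH(2) by auto
    obtain k where k: "k \<in> lengths H h" using lengths_ne[OF sm h(1)] by auto
    then have "k \<noteq> 0" using zero_lengths h(2) by metis
    then show "\<exists>k. k \<in> lengths H h \<and> k \<ge> 1" using k by (intro exI[of _ k]) auto
  qed
  then obtain kh where kh: "\<forall>h\<in>GH. kh h \<in> lengths H h \<and> kh h \<ge> 1"
    by (metis bchoice)
  define Mb where "Mb = (\<Sum>h\<in>GH. nrm h)"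
  have main: "\<exists>x\<in>H - {vzero}. ereal (real B) < elast_elem H x" for B :: nat
  proof -
    obtain a where a: "a \<in> atoms H" "nrm a > B * Mb" using unb by metis
    have aH: "a \<in> H" "a \<noteq> vzero" using a(1) atoms_sub atoms_nz by auto
    obtain e where e: "\<forall>h\<in>GH. 0 \<le> e h" "to_rat a = (\<lambda>i. \<Sum>h\<in>GH. e h * of_nat (h i))"
      using GH(3) aH(1) unfolding cone_rep_def by metis
    have "\<exists>N::nat. N > 0 \<and> (\<exists>m. \<forall>h\<in>GH. of_nat N * e h = of_nat (m h))"
      by (rule clear_denoms[OF GH(1)]) (use e(1) in auto)
    then obtain N m where N: "N > 0" "\<forall>h\<in>GH. of_nat N * e h = of_nat (m h)"
      by (elim exE conjE)
    have eqn: "N * a i = (\<Sum>h\<in>GH. m h * h i)" for i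
    proof -
      have ai: "to_rat a i = (\<Sum>h\<in>GH. e h * of_nat (h i))" using e(2) by (rule fun_cong)
      have "(of_nat (N * a i) :: rat) = of_nat N * to_rat a i" by (simp add: to_rat_def)
      also have "\<dots> = (\<Sum>h\<in>GH. (of_nat N * e h) * of_nat (h i))"
        by (simp add: ai sum_distrib_left mult.assoc)
      also have "\<dots> = (\<Sum>h\<in>GH. of_nat (m h) * of_nat (h i))"
        using N(2) by (intro sum.cong) auto
      also have "\<dots> = of_nat (\<Sum>h\<in>GH. m h * h i)" by simp
      finally show ?thesis by (simp only: of_nat_eq_iff)
    qed
    define x where "x = (\<lambda>i. N * a i)"
    have xeq: "x = (\<lambda>i. \<Sum>h\<in>GH. m h * h i)" using eqn by (auto simp: x_def)
    define K where "K = (\<Sum>h\<in>GH. m h * kh h)"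
    have K: "K \<in> lengths H x"
      unfolding xeq K_def using lengths_sum[of GH kh H "\<lambda>h. h" m] GH(1) kh by auto
    have Nl: "N \<in> lengths H x" using lengths_mult[OF atom_length[OF a(1)], of N] by (simp add: x_def)
    have xH: "x \<in> H" by (rule lengths_in_H[OF sm Nl])
    have xnz: "x \<noteq> vzero"
    proof
      assume "x = vzero"
      then have "\<forall>i. N * a i = 0" by (auto simp: x_def vzero_def fun_eq_iff)
      then have "a = vzero" using N(1) by (auto simp: vzero_def)
      then show False using aH(2) by simp
    qed
    have el: "ereal (real K / real N) \<le> elast_elem H x" by (rule elast_elem_ge[OF sm xH xnz K Nl])
    have summ: "(\<Sum>h\<in>GH. m h) \<le> K" unfolding K_def by (rule sum_mono) (use kh in auto)
    have nrmx: "N * nrm a = (\<Sum>h\<in>GH. m h * nrm h)"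
    proof -
      have "N * nrm a = (\<Sum>i\<in>UNIV. \<Sum>h\<in>GH. m h * h i)" by (simp add: nrm_def sum_distrib_left eqn)
      also have "\<dots> = (\<Sum>h\<in>GH. \<Sum>i\<in>UNIV. m h * h i)" by (rule sum.swap)
      also have "\<dots> = (\<Sum>h\<in>GH. m h * nrm h)" by (simp add: nrm_def sum_distrib_left)
      finally show ?thesis .
    qed
    have "(\<Sum>h\<in>GH. m h * nrm h) \<le> (\<Sum>h\<in>GH. m h * Mb)"
    proof (rule sum_mono)
      fix h assume "h \<in> GH"
      then have "nrm h \<le> Mb" unfolding Mb_def by (rule member_le_sum[OF _ _ GH(1)]) simp
      then show "m h * nrm h \<le> m h * Mb" by simp
    qed
    also have "\<dots> = Mb * (\<Sum>h\<in>GH. m h)" by (simp add: sum_distrib_left mult.commute)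
    finally have le1: "N * nrm a \<le> Mb * (\<Sum>h\<in>GH. m h)" using nrmx by simp
    have "N * (B * Mb) < N * nrm a" using a(2) N(1) by simp
    moreover have "Mb * (N * B) = N * (B * Mb)" by (simp add: ac_simps)
    ultimately have "Mb * (N * B) < Mb * (\<Sum>h\<in>GH. m h)" using le1 by linarith
    then have "N * B < (\<Sum>h\<in>GH. m h)" by simp
    then have "N * B < K" using summ by simp
    then have "real N * real B < real K" by (metis of_nat_less_iff of_nat_mult)
    then have "real B < real K / real N" using N(1) by (simp add: field_simps)
    then have "ereal (real B) < ereal (real K / real N)" by simp
    then have "ereal (real B) < elast_elem H x" using el by (rule order_less_le_trans)
    then show ?thesis using xH xnz by blast
  qed
  have "(SUP x\<in>H - {vzero}. elast_elem H x) = top"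
  proof (subst SUP_eq_top_iff, intro allI impI)
    fix y :: ereal assume "y < top"
    obtain B :: nat where "y \<le> ereal (real B)"
    proof (cases y)
      case (real r) then show ?thesis using that[of "nat \<lceil>r\<rceil>"] real_nat_ceiling_ge by auto
    next
      case PInf then show ?thesis using \<open>y < top\<close> by simp
    next
      case MInf then show ?thesis using that[of 0] by simp
    qed
    then show "\<exists>i\<in>H - {vzero}. y < elast_elem H i" using main[of B] by (meson order_le_less_trans)
  qed
  then show ?thesis unfolding elasticity_def by (simp add: top_ereal_def)
qed




lemma nat_seq_mono_sub:
  fixes g :: "nat \<Rightarrow> nat"
  shows "\<exists>\<tau>::nat\<Rightarrow>nat. strict_mono \<tau> \<and> (\<forall>i j. i \<le> j \<longrightarrow> g (\<tau> i) \<le> g (\<tau> j))"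
proof -
  from seq_monosub[of g] obtain \<tau> :: "nat \<Rightarrow> nat" where t: "strict_mono \<tau>" "monoseq (\<lambda>n. g (\<tau> n))"
    by (elim exE conjE)
  show ?thesis
  proof (cases "\<forall>m. \<forall>n\<ge>m. g (\<tau> m) \<le> g (\<tau> n)")
    case True
    then have "\<forall>i j. i \<le> j \<longrightarrow> g (\<tau> i) \<le> g (\<tau> j)" by simp
    with t(1) show ?thesis by (intro exI[of _ \<tau>] conjI)
  next
    case False
    then have dec: "\<forall>m. \<forall>n\<ge>m. g (\<tau> n) \<le> g (\<tau> m)" using t(2) unfolding monoseq_def by (elim disjE) simp_all
    have "\<exists>x. True \<and> (\<forall>y. True \<longrightarrow> g (\<tau> x) \<le> g (\<tau> y))"
      by (rule ex_has_least_nat[of "\<lambda>_. True" 0 "\<lambda>n. g (\<tau> n)"]) simp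
    then obtain N where N: "\<And>y. g (\<tau> N) \<le> g (\<tau> y)" by auto
    have c: "g (\<tau> n) = g (\<tau> N)" if "n \<ge> N" for n
    proof -
      have "g (\<tau> n) \<le> g (\<tau> N)" using dec that by simp
      then show ?thesis using N[of n] by simp
    qed
    have "strict_mono (\<lambda>i. \<tau> (i + N))" using t(1) unfolding strict_mono_def by simp
    moreover have "\<forall>i j::nat. i \<le> j \<longrightarrow> g (\<tau> (i + N)) \<le> g (\<tau> (j + N))"
    proof (intro allI impI)
      fix i j :: nat
      have "g (\<tau> (i + N)) = g (\<tau> N)" by (rule c) simp
      moreover have "g (\<tau> (j + N)) = g (\<tau> N)" by (rule c) simp
      ultimately show "g (\<tau> (i + N)) \<le> g (\<tau> (j + N))" by simp
    qed
    ultimately show ?thesis by (intro exI[of _ "\<lambda>i. \<tau> (i + N)"] conjI)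
  qed
qed

lemma dickson_sub:
  fixes f :: "nat \<Rightarrow> 'a \<Rightarrow> nat"
  assumes "finite I"
  shows "\<exists>\<sigma>::nat\<Rightarrow>nat. strict_mono \<sigma> \<and> (\<forall>i j. i \<le> j \<longrightarrow> (\<forall>k\<in>I. f (\<sigma> i) k \<le> f (\<sigma> j) k))"
  using assms
proof (induction I rule: finite_induct)
  case empty
  show ?case by (intro exI[of _ "id::nat\<Rightarrow>nat"]) (simp add: strict_mono_def)
next
  case (insert k I)
  from insert.IH obtain \<sigma> :: "nat \<Rightarrow> nat" where s: "strict_mono \<sigma>" "\<forall>i j. i \<le> j \<longrightarrow> (\<forall>k\<in>I. f (\<sigma> i) k \<le> f (\<sigma> j) k)"
    by (elim exE conjE)
  from nat_seq_mono_sub[of "\<lambda>t. f (\<sigma> t) k"]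
  obtain \<tau> :: "nat \<Rightarrow> nat" where t: "strict_mono \<tau>" "\<forall>i j. i \<le> j \<longrightarrow> f (\<sigma> (\<tau> i)) k \<le> f (\<sigma> (\<tau> j)) k"
    by (elim exE conjE)
  have "strict_mono (\<lambda>i. \<sigma> (\<tau> i))" using s(1) t(1) unfolding strict_mono_def by simp
  moreover have "\<forall>i j::nat. i \<le> j \<longrightarrow> (\<forall>k'\<in>insert k I. f (\<sigma> (\<tau> i)) k' \<le> f (\<sigma> (\<tau> j)) k')"
  proof (intro allI impI ballI)
    fix i j :: nat and k' assume ij: "i \<le> j" and k': "k' \<in> insert k I"
    have "\<tau> i \<le> \<tau> j" using t(1) ij by (simp add: strict_mono_less_eq)
    then show "f (\<sigma> (\<tau> i)) k' \<le> f (\<sigma> (\<tau> j)) k'" using s(2) t(2) ij k' by auto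
  qed
  ultimately show ?case by (intro exI[of _ "\<lambda>i. \<sigma> (\<tau> i)"] conjI)
qed

lemma dickson:
  fixes f :: "nat \<Rightarrow> 'a \<Rightarrow> nat"
  assumes "finite I"
  shows "\<exists>i j. i < j \<and> (\<forall>k\<in>I. f i k \<le> f j k)"
proof -
  from dickson_sub[OF assms, of f]
  obtain \<sigma> :: "nat \<Rightarrow> nat" where s: "strict_mono \<sigma>" "\<forall>i j. i \<le> j \<longrightarrow> (\<forall>k\<in>I. f (\<sigma> i) k \<le> f (\<sigma> j) k)"
    by (elim exE conjE)
  have "\<sigma> 0 < \<sigma> 1" using s(1) by (simp add: strict_mono_def)
  then show ?thesis using s(2) by (intro exI[of _ "\<sigma> 0"] exI[of _ "\<sigma> 1"]) auto
qed




definition valP :: "('n \<Rightarrow> nat) set \<Rightarrow> (('n \<Rightarrow> nat) \<times> bool \<Rightarrow> nat) \<Rightarrow> bool \<Rightarrow> 'n \<Rightarrow> nat" where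
  "valP A w b = (\<lambda>i. \<Sum>a\<in>A. w (a, b) * a i)"

definition szP :: "('n \<Rightarrow> nat) set \<Rightarrow> (('n \<Rightarrow> nat) \<times> bool \<Rightarrow> nat) \<Rightarrow> bool \<Rightarrow> nat" where
  "szP A w b = (\<Sum>a\<in>A. w (a, b))"

definition Sol :: "('n \<Rightarrow> nat) set \<Rightarrow> (('n \<Rightarrow> nat) \<times> bool \<Rightarrow> nat) set" where
  "Sol A = {w. (\<forall>a b. a \<notin> A \<longrightarrow> w (a, b) = 0) \<and> valP A w True = valP A w False \<and> szP A w True > 0}"

definition ratio :: "('n \<Rightarrow> nat) set \<Rightarrow> (('n \<Rightarrow> nat) \<times> bool \<Rightarrow> nat) \<Rightarrow> real" where
  "ratio A w = real (szP A w True) / real (szP A w False)"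

definition Mn :: "('n \<Rightarrow> nat) set \<Rightarrow> (('n \<Rightarrow> nat) \<times> bool \<Rightarrow> nat) set" where
  "Mn A = {w \<in> Sol A. \<forall>w'\<in>Sol A. w' \<le> w \<longrightarrow> w' = w}"

lemma val_zero:
  assumes "finite A" "\<And>a. a \<in> A \<Longrightarrow> a \<noteq> vzero" "valP A w b = (\<lambda>i. 0)" "a \<in> A"
  shows "w (a, b) = 0"
proof -
  obtain i where i: "a i \<noteq> 0" using assms(2)[OF assms(4)] by (auto simp: vzero_def fun_eq_iff)
  have "(\<Sum>a\<in>A. w (a, b) * a i) = 0" using fun_cong[OF assms(3), of i] by (simp add: valP_def)
  then have "w (a, b) * a i = 0" using assms(1,4) by simp
  then show ?thesis using i by simp
qed

lemma sz_zero:
  assumes "finite A" "szP A w b = 0" "a \<in> A"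
  shows "w (a, b) = 0"
  using assms by (simp add: szP_def)

lemma valP_zero_if:
  assumes "\<And>a. a \<in> A \<Longrightarrow> w (a, b) = 0"
  shows "valP A w b = (\<lambda>i. 0)"
  using assms by (simp add: valP_def)

lemma Sol_szF:
  assumes "finite A" "\<And>a. a \<in> A \<Longrightarrow> a \<noteq> vzero" "w \<in> Sol A"
  shows "szP A w False > 0"
proof (rule ccontr)
  assume "\<not> szP A w False > 0"
  then have "szP A w False = 0" by simp
  then have "valP A w False = (\<lambda>i. 0)" using sz_zero[OF assms(1)] by (intro valP_zero_if) 
  then have "valP A w True = (\<lambda>i. 0)" using assms(3) by (simp add: Sol_def)
  then have "\<And>a. a \<in> A \<Longrightarrow> w (a, True) = 0" using val_zero[OF assms(1,2)] by blast
  then have "szP A w True = 0" by (simp add: szP_def)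
  then show False using assms(3) by (simp add: Sol_def)
qed

lemma Mn_finite:
  fixes A :: "('n \<Rightarrow> nat) set"
  assumes "finite A"
  shows "finite (Mn A)"
proof (rule ccontr)
  assume "infinite (Mn A)"
  then obtain f :: "nat \<Rightarrow> (('n \<Rightarrow> nat) \<times> bool \<Rightarrow> nat)" where f: "inj f" "range f \<subseteq> Mn A"
    using infinite_countable_subset by blast
  have fI: "finite (A \<times> (UNIV :: bool set))" using assms by simp
  from dickson[OF fI, of f] obtain i j where ij: "i < j" "\<forall>k\<in>A \<times> UNIV. f i k \<le> f j k"
    by (elim exE conjE)
  have fi: "f i \<in> Sol A" "f j \<in> Mn A" using f(2) by (auto simp: Mn_def)
  have "f i \<le> f j"
  proof (rule le_funI)
    fix k :: "('n \<Rightarrow> nat) \<times> bool"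
    obtain a b where k: "k = (a, b)" by (cases k)
    show "f i k \<le> f j k"
    proof (cases "a \<in> A")
      case True then show ?thesis using ij(2) k by auto
    next
      case False then have "f i k = 0" using fi(1) k by (simp add: Sol_def)
      then show ?thesis by simp
    qed
  qed
  then have "f i = f j" using fi unfolding Mn_def by blast
  then have "i = j" using f(1) by (simp add: inj_eq)
  then show False using ij(1) by simp
qed

lemma mediant:
  fixes p1 p2 q1 q2 R :: real
  assumes "q1 > 0" "q2 > 0" "p1 / q1 \<le> R" "p2 / q2 \<le> R"
  shows "(p1 + p2) / (q1 + q2) \<le> R"
proof -
  have "p1 \<le> R * q1" "p2 \<le> R * q2" using assms by (simp_all add: pos_divide_le_eq)
  then have "p1 + p2 \<le> R * (q1 + q2)" by (simp add: distrib_left)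
  then show ?thesis using assms by (simp add: pos_divide_le_eq)
qed

lemma decomp:
  assumes fin: "finite A" and nz: "\<And>a. a \<in> A \<Longrightarrow> a \<noteq> vzero" and w: "w \<in> Sol A"
  shows "\<exists>w0\<in>Mn A. ratio A w \<le> ratio A w0"
  using w
proof (induction "szP A w True + szP A w False" arbitrary: w rule: less_induct)
  case less
  show ?case
  proof (cases "w \<in> Mn A")
    case True then show ?thesis by blast
  next
    case False
    then obtain w' where w': "w' \<in> Sol A" "w' \<le> w" "w' \<noteq> w" using less.prems unfolding Mn_def by blast
    define w'' where "w'' = (\<lambda>j. w j - w' j)"
    have wsum: "w j = w' j + w'' j" for j using w'(2) unfolding w''_def le_fun_def by (metis le_add_diff_inverse)
    have vsum: "valP A w b i = valP A w' b i + valP A w'' b i" for b i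
      unfolding valP_def by (simp add: wsum distrib_right sum.distrib)
    have ssum: "szP A w b = szP A w' b + szP A w'' b" for b
      unfolding szP_def by (simp add: wsum sum.distrib)
    have supp: "\<forall>a b. a \<notin> A \<longrightarrow> w'' (a, b) = 0" using less.prems by (simp add: Sol_def w''_def)
    have veq: "valP A w'' True = valP A w'' False"
    proof
      fix i
      have "valP A w True i = valP A w False i" "valP A w' True i = valP A w' False i"
        using less.prems w'(1) by (simp_all add: Sol_def)
      then show "valP A w'' True i = valP A w'' False i" using vsum[of True i] vsum[of False i] by simp
    qed
    have pos: "szP A w'' True > 0"
    proof (rule ccontr)
      assume "\<not> szP A w'' True > 0"
      then have "szP A w'' True = 0" by simp
      then have "valP A w'' True = (\<lambda>i. 0)" using sz_zero[OF fin] by (intro valP_zero_if)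
      then have "valP A w'' False = (\<lambda>i. 0)" using veq by simp
      then have z2: "\<And>a. a \<in> A \<Longrightarrow> w'' (a, False) = 0" using val_zero[OF fin nz] by blast
      have z1: "\<And>a. a \<in> A \<Longrightarrow> w'' (a, True) = 0" using sz_zero[OF fin \<open>szP A w'' True = 0\<close>] by blast
      have "w'' j = 0" for j
      proof -
        obtain a b where j: "j = (a, b)" by (cases j)
        show ?thesis using z1 z2 supp j by (cases b; cases "a \<in> A") auto
      qed
      then have "w = w'" using wsum by (simp add: fun_eq_iff)
      then show False using w'(3) by simp
    qed
    have w''S: "w'' \<in> Sol A" using supp veq pos by (simp add: Sol_def)
    have p1: "szP A w' True > 0" using w'(1) by (simp add: Sol_def)
    have lt1: "szP A w' True + szP A w' False < szP A w True + szP A w False"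
      using ssum[of True] ssum[of False] pos by simp
    have lt2: "szP A w'' True + szP A w'' False < szP A w True + szP A w False"
      using ssum[of True] ssum[of False] p1 by simp
    obtain w1 where w1: "w1 \<in> Mn A" "ratio A w' \<le> ratio A w1" using less.hyps[OF lt1 w'(1)] by blast
    obtain w2 where w2: "w2 \<in> Mn A" "ratio A w'' \<le> ratio A w2" using less.hyps[OF lt2 w''S] by blast
    define R where "R = max (ratio A w1) (ratio A w2)"
    have q1: "szP A w' False > 0" by (rule Sol_szF[OF fin nz w'(1)])
    have q2: "szP A w'' False > 0" by (rule Sol_szF[OF fin nz w''S])
    have "ratio A w \<le> R"
    proof -
      have "ratio A w = (real (szP A w' True) + real (szP A w'' True)) / (real (szP A w' False) + real (szP A w'' False))"
        unfolding ratio_def using ssum[of True] ssum[of False] by simp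
      also have "\<dots> \<le> R"
        by (rule mediant) (use q1 q2 w1 w2 in \<open>auto simp: R_def ratio_def\<close>)
      finally show ?thesis .
    qed
    then show ?thesis using w1 w2 unfolding R_def by (cases "ratio A w1 \<le> ratio A w2") auto
  qed
qed




lemma cnt_sum:
  fixes f :: "'a \<Rightarrow> nat"
  assumes "finite A" "set xs \<subseteq> A"
  shows "(\<Sum>a\<in>A. count_list xs a * f a) = sum_list (map f xs)"
  using assms(2)
proof (induction xs)
  case Nil then show ?case by simp
next
  case (Cons x xs)
  have xA: "x \<in> A" using Cons.prems by simp
  have "(\<Sum>a\<in>A. count_list (x # xs) a * f a) = (\<Sum>a\<in>A. count_list xs a * f a + (if x = a then f a else 0))"
    by (rule sum.cong) auto
  also have "\<dots> = (\<Sum>a\<in>A. count_list xs a * f a) + (\<Sum>a\<in>A. if x = a then f a else 0)"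
    by (rule sum.distrib)
  also have "(\<Sum>a\<in>A. if x = a then f a else 0) = f x" using assms(1) xA by (simp add: sum.delta)
  finally show ?case using Cons by simp
qed

lemma link1:
  fixes H :: "('n::finite \<Rightarrow> nat) set"
  assumes sm: "is_submonoid H" and fin: "finite (atoms H)" and x: "x \<in> H" "x \<noteq> vzero"
    and k: "k \<in> lengths H x" and l: "l \<in> lengths H x"
  shows "\<exists>w\<in>Sol (atoms H). szP (atoms H) w True = k \<and> szP (atoms H) w False = l"
proof -
  define A where "A = atoms H"
  obtain as where as: "length as = k" "set as \<subseteq> A" "lsum as = x" using k by (auto simp: lengths_def A_def)
  obtain bs where bs: "length bs = l" "set bs \<subseteq> A" "lsum bs = x" using l by (auto simp: lengths_def A_def)
  define w where "w = (\<lambda>(a::'n \<Rightarrow> nat, b::bool). if a \<in> A then (if b then count_list as a else count_list bs a) else 0)"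
  have finA: "finite A" using fin by (simp add: A_def)
  have gen: "valP A w b = lsum cs \<and> szP A w b = length cs"
    if "set cs \<subseteq> A" "\<And>a. a \<in> A \<Longrightarrow> w (a, b) = count_list cs a" for b cs
  proof
    show "valP A w b = lsum cs"
    proof
      fix i
      have "valP A w b i = (\<Sum>a\<in>A. count_list cs a * a i)" unfolding valP_def
        by (rule sum.cong) (use that in auto)
      also have "\<dots> = sum_list (map (\<lambda>a. a i) cs)" by (rule cnt_sum[OF finA that(1)])
      finally show "valP A w b i = lsum cs i" by (simp add: lsum_def)
    qed
    have "szP A w b = (\<Sum>a\<in>A. count_list cs a * 1)" unfolding szP_def
      by (rule sum.cong) (use that in auto)
    also have "\<dots> = sum_list (map (\<lambda>a. 1) cs)" by (rule cnt_sum[OF finA that(1)])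
    also have "\<dots> = length cs" by (induction cs) auto
    finally show "szP A w b = length cs" .
  qed
  have gT: "valP A w True = x" "szP A w True = k" using gen[of as True] as by (auto simp: w_def)
  have gF: "valP A w False = x" "szP A w False = l" using gen[of bs False] bs by (auto simp: w_def)
  have "k \<noteq> 0" using zero_lengths k x(2) by metis
  then have "w \<in> Sol A" using gT gF by (auto simp: Sol_def w_def)
  then show ?thesis using gT gF unfolding A_def by blast
qed

lemma link2:
  fixes H :: "('n::finite \<Rightarrow> nat) set"
  assumes sm: "is_submonoid H" and fin: "finite (atoms H)" and w: "w \<in> Sol (atoms H)"
  shows "valP (atoms H) w True \<in> H" "valP (atoms H) w True \<noteq> vzero"
    "ereal (ratio (atoms H) w) \<le> elast_elem H (valP (atoms H) w True)"
proof -
  define A where "A = atoms H"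
  have nz: "\<And>a. a \<in> A \<Longrightarrow> a \<noteq> vzero" unfolding A_def using atoms_nz by blast
  have finA: "finite A" using fin by (simp add: A_def)
  have len: "szP A w b \<in> lengths H (valP A w b)" for b
  proof -
    have "(\<Sum>a\<in>A. w (a, b) * 1) \<in> lengths H (\<lambda>i. \<Sum>a\<in>A. w (a, b) * a i)"
      by (rule lengths_sum[of A "\<lambda>_. 1" H "\<lambda>a. a" "\<lambda>a. w (a, b)"]) (use finA atom_length in \<open>auto simp: A_def\<close>)
    then show ?thesis by (simp add: szP_def valP_def)
  qed
  have eq: "valP A w True = valP A w False" using w by (simp add: Sol_def A_def)
  have inH: "valP A w True \<in> H" by (rule lengths_in_H[OF sm len])
  have nzv: "valP A w True \<noteq> vzero"
  proof
    assume "valP A w True = vzero"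
    then have "valP A w True = (\<lambda>i. 0)" by (simp add: vzero_def)
    then have "\<And>a. a \<in> A \<Longrightarrow> w (a, True) = 0" using val_zero[OF finA nz] by blast
    then have "szP A w True = 0" by (simp add: szP_def)
    then show False using w by (simp add: Sol_def A_def)
  qed
  have lF: "szP A w False \<in> lengths H (valP A w True)" using len[of False] eq by simp
  have "ereal (real (szP A w True) / real (szP A w False)) \<le> elast_elem H (valP A w True)"
    by (rule elast_elem_ge[OF sm inH nzv len lF])
  then show "valP (atoms H) w True \<in> H" "valP (atoms H) w True \<noteq> vzero"
    "ereal (ratio (atoms H) w) \<le> elast_elem H (valP (atoms H) w True)"
    using inH nzv by (simp_all add: ratio_def A_def)
qed

lemma finite_case:
  fixes H :: "('n::finite \<Rightarrow> nat) set"
  assumes sm: "is_submonoid H" and fin: "finite (atoms H)" and x1: "x1 \<in> H" "x1 \<noteq> vzero"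
  shows "\<exists>q :: rat. elasticity H = ereal (of_rat q)"
proof -
  define A where "A = atoms H"
  have nz: "\<And>a. a \<in> A \<Longrightarrow> a \<noteq> vzero" unfolding A_def using atoms_nz by blast
  have finA: "finite A" using fin by (simp add: A_def)
  note e1 = elast_elem_eq[OF sm x1]
  obtain w1 where w1: "w1 \<in> Sol A"
    using link1[OF sm fin x1 e1(2) e1(3)] unfolding A_def by blast
  obtain wm where wm: "wm \<in> Mn A" using decomp[OF finA nz w1] by blast
  have finM: "finite (Mn A)" by (rule Mn_finite[OF finA])
  define R where "R = Max (ratio A ` Mn A)"
  have "R \<in> ratio A ` Mn A" unfolding R_def using finM wm by (intro Max_in) auto
  then obtain w0 where w0: "w0 \<in> Mn A" "ratio A w0 = R" by blast
  have w0S: "w0 \<in> Sol A" using w0(1) by (simp add: Mn_def)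
  have maxR: "ratio A w \<le> R" if ws: "w \<in> Sol A" for w
  proof -
    obtain w' where "w' \<in> Mn A" "ratio A w \<le> ratio A w'" using decomp[OF finA nz ws] by blast
    moreover have "ratio A w' \<le> R" unfolding R_def using finM \<open>w' \<in> Mn A\<close> by (intro Max_ge) auto
    ultimately show ?thesis by simp
  qed
  define x0 where "x0 = valP A w0 True"
  have x0: "x0 \<in> H" "x0 \<noteq> vzero" "ereal R \<le> elast_elem H x0"
    using link2[OF sm fin] w0S w0(2) unfolding x0_def A_def by auto
  have bound: "elast_elem H x \<le> elast_elem H x0" if "x \<in> H - {vzero}" for x
  proof -
    have xH: "x \<in> H" "x \<noteq> vzero" using that by auto
    note e = elast_elem_eq[OF sm xH]
    obtain w where w: "w \<in> Sol A" "szP A w True = Max (lengths H x)" "szP A w False = Min (lengths H x)"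
      using link1[OF sm fin xH e(2) e(3)] unfolding A_def by blast
    have "elast_elem H x = ereal (ratio A w)" using e(1) w by (simp add: ratio_def)
    also have "\<dots> \<le> ereal R" using maxR[OF w(1)] by simp
    also have "\<dots> \<le> elast_elem H x0" by (rule x0(3))
    finally show ?thesis .
  qed
  have el: "elasticity H = elast_elem H x0"
    unfolding elasticity_def
  proof (rule antisym)
    show "(SUP x\<in>H - {vzero}. elast_elem H x) \<le> elast_elem H x0" by (rule SUP_least) (rule bound)
    show "elast_elem H x0 \<le> (SUP x\<in>H - {vzero}. elast_elem H x)" by (rule SUP_upper) (use x0 in auto)
  qed
  note e0 = elast_elem_eq[OF sm x0(1) x0(2)]
  have "elast_elem H x0 = ereal (of_rat (of_nat (Max (lengths H x0)) / of_nat (Min (lengths H x0))))"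
    using e0(1) by (simp add: of_rat_divide)
  then have "elasticity H = ereal (of_rat (of_nat (Max (lengths H x0)) / of_nat (Min (lengths H x0))))"
    using el by simp
  then show ?thesis by (rule exI)
qed


lemma nonzero_elem:
  fixes H :: "('n::finite \<Rightarrow> nat) set"
  assumes "gp_rank H d" "d \<ge> 3"
  shows "\<exists>x\<in>H. x \<noteq> vzero"
proof -
  obtain S where S: "S \<subseteq> to_rat ` H" "card S = d" using assms(1) unfolding gp_rank_def by blast
  show ?thesis
  proof (rule ccontr)
    assume "\<not> (\<exists>x\<in>H. x \<noteq> vzero)"
    then have "S \<subseteq> {to_rat vzero}" using S(1) by auto
    then have "card S \<le> card {to_rat (vzero :: 'n \<Rightarrow> nat)}" by (rule card_mono[rotated]) simp
    then show False using S(2) assms(2) by simp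
  qed
qed

theorem theorem5p8:
  fixes H :: "('n::finite \<Rightarrow> nat) set" and d :: nat
  assumes "is_submonoid H"
    and "gp_rank H d"
    and "d \<ge> 3"
    and "polyhedral_cone (rat_cone (to_rat ` H))"
  shows "elasticity H = \<infinity> \<or> (\<exists>q :: rat. elasticity H = ereal (of_rat q))"
proof (cases "\<forall>B. \<exists>a\<in>atoms H. nrm a > B")
  case True
  then have "elasticity H = \<infinity>" using infinite_case[OF assms(1) assms(4)] by blast
  then show ?thesis by simp
next
  case False
  then obtain B where B: "\<And>a. a \<in> atoms H \<Longrightarrow> nrm a \<le> B" by (meson not_le)
  have "atoms H \<subseteq> PiE UNIV (\<lambda>_. {..B})"
  proof
    fix a assume a: "a \<in> atoms H"
    have "a i \<le> B" for i
    proof -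
      have "a i \<le> nrm a" unfolding nrm_def by (rule member_le_sum) auto
      then show ?thesis using B[OF a] by simp
    qed
    then show "a \<in> PiE UNIV (\<lambda>_. {..B})" by (simp add: PiE_iff)
  qed
  moreover have "finite (PiE (UNIV :: 'n set) (\<lambda>_. {..B}))" by (rule finite_PiE) auto
  ultimately have fin: "finite (atoms H)" by (rule finite_subset)
  obtain x1 where x1: "x1 \<in> H" "x1 \<noteq> vzero" using nonzero_elem[OF assms(2,3)] by blast
  show ?thesis using finite_case[OF assms(1) fin x1] by simp
qed

end
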